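(* Let $\Phi(x,y)=-\phi(x-y)$ and let $f:\mathbb R^n\to\mathbb R$ be continuously differentiable. Then $f$ is a-weakly convex if and only if $f$ is left $\Phi$-convex.
   Context: Standing assumption: $\phi:\mathbb R^n\to\mathbb R$ is convex, finite-valued, differentiable and strictly convex (Legendre with full domain), super-coercive; $\phi^*$ has the same properties and $\nabla\phi^*=(\nabla\phi)^{-1}$. A proper lsc $f$ is a-weakly convex if for every $(\bar x,\bar v)\in\operatorname{graph}\partial f$ ($\partial f$ the limiting subdifferential): $f(x)\ge f(\bar x)-\phi(x-\bar x+\nabla\phi^*(-\bar v))+\phi(\nabla\phi^*(-\bar v))$ for all $x$. Left $\Phi$-convex: $f=\sup_{i\in I}\Phi(\cdot,y_i)-\beta_i$ for some family $(y_i,\beta_i)\in\mathbb R^n\times\overline{\mathbb R}$. *)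

theory Defs
  imports "HOL-Analysis.Analysis" "HOL-Library.Extended_Real"
begin

definition strictly_convex :: "('a::real_vector \<Rightarrow> real) \<Rightarrow> bool" where
  "strictly_convex \<phi> \<longleftrightarrow> (\<forall>x y t. x \<noteq> y \<longrightarrow> 0 < t \<longrightarrow> t < 1 \<longrightarrow>
      \<phi> ((1 - t) *\<^sub>R x + t *\<^sub>R y) < (1 - t) * \<phi> x + t * \<phi> y)"

definition super_coercive :: "('a::real_normed_vector \<Rightarrow> real) \<Rightarrow> bool" where
  "super_coercive \<phi> \<longleftrightarrow> filterlim (\<lambda>x. \<phi> x / norm x) at_top at_infinity"

definition grad :: "('a::euclidean_space \<Rightarrow> real) \<Rightarrow> 'a \<Rightarrow> 'a" where
  "grad f x = (SOME g. (f has_derivative (\<lambda>h. g \<bullet> h)) (at x))"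

text \<open>Legendre function with full domain: finite-valued (automatic), convex,
  differentiable everywhere, strictly convex, and super-coercive.\<close>
definition legendre_full :: "('a::euclidean_space \<Rightarrow> real) \<Rightarrow> bool" where
  "legendre_full \<phi> \<longleftrightarrow> convex_on UNIV \<phi> \<and> (\<forall>x. \<phi> differentiable (at x))
     \<and> strictly_convex \<phi> \<and> super_coercive \<phi>"

text \<open>Convex (Fenchel) conjugate; under the standing assumptions the supremum is finite.\<close>
definition fconj :: "('a::euclidean_space \<Rightarrow> real) \<Rightarrow> 'a \<Rightarrow> real" where
  "fconj \<phi> v = (SUP x. v \<bullet> x - \<phi> x)"

definition standing :: "('a::euclidean_space \<Rightarrow> real) \<Rightarrow> bool" where
  "standing \<phi> \<longleftrightarrow> legendre_full \<phi> \<and> legendre_full (fconj \<phi>)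
     \<and> bij (grad \<phi>) \<and> grad (fconj \<phi>) = inv (grad \<phi>)"

definition frechet_subdiff :: "('a::euclidean_space \<Rightarrow> real) \<Rightarrow> 'a \<Rightarrow> 'a set" where
  "frechet_subdiff f x = {v. \<forall>\<epsilon>>0. \<forall>\<^sub>F y in at x.
      f y \<ge> f x + v \<bullet> (y - x) - \<epsilon> * norm (y - x)}"

definition limiting_subdiff :: "('a::euclidean_space \<Rightarrow> real) \<Rightarrow> 'a \<Rightarrow> 'a set" where
  "limiting_subdiff f x = {v. \<exists>xs vs. xs \<longlonglongrightarrow> x \<and> (\<lambda>k. f (xs k)) \<longlonglongrightarrow> f x
      \<and> vs \<longlonglongrightarrow> v \<and> (\<forall>k. vs k \<in> frechet_subdiff f (xs k))}"

definition a_weakly_convex :: "('a::euclidean_space \<Rightarrow> real) \<Rightarrow> ('a \<Rightarrow> real) \<Rightarrow> bool" where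
  "a_weakly_convex \<phi> f \<longleftrightarrow> (\<forall>xb vb. vb \<in> limiting_subdiff f xb \<longrightarrow> (\<forall>x.
      f x \<ge> f xb - \<phi> (x - xb + grad (fconj \<phi>) (- vb)) + \<phi> (grad (fconj \<phi>) (- vb))))"

definition Phi :: "('a::euclidean_space \<Rightarrow> real) \<Rightarrow> 'a \<Rightarrow> 'a \<Rightarrow> real" where
  "Phi \<phi> x y = - \<phi> (x - y)"

text \<open>Left Phi-convexity: f is a pointwise supremum of Phi(., y_i) - beta_i over some
  family (y_i, beta_i) in R^n x extended reals; the family is represented by its set
  of pairs.\<close>
definition left_Phi_convex :: "('a \<Rightarrow> 'a \<Rightarrow> real) \<Rightarrow> ('a \<Rightarrow> real) \<Rightarrow> bool" where
  "left_Phi_convex \<Phi> f \<longleftrightarrow> (\<exists>S :: ('a \<times> ereal) set.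
      \<forall>x. ereal (f x) = (SUP p\<in>S. ereal (\<Phi> x (fst p)) - snd p))"

end

theory Submission
  imports Defs
begin

lemma linear_repr:
  fixes D :: "'a::euclidean_space \<Rightarrow> real"
  assumes "linear D"
  shows "D h = (\<Sum>b\<in>Basis. D b *\<^sub>R b) \<bullet> h"
proof -
  have "D h = D (\<Sum>b\<in>Basis. (h \<bullet> b) *\<^sub>R b)" by (simp add: euclidean_representation)
  also have "\<dots> = (\<Sum>b\<in>Basis. (h \<bullet> b) * D b)"
    using assms by (simp add: linear_sum linear_scale)
  also have "\<dots> = (\<Sum>b\<in>Basis. (D b *\<^sub>R b) \<bullet> h)"
    by (rule sum.cong) (auto simp: inner_commute)
  also have "\<dots> = (\<Sum>b\<in>Basis. D b *\<^sub>R b) \<bullet> h"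
    by (rule inner_sum_left[symmetric])
  finally show ?thesis .
qed

lemma grad_has_derivative:
  fixes \<phi> :: "'a::euclidean_space \<Rightarrow> real"
  assumes "\<phi> differentiable (at x)"
  shows "(\<phi> has_derivative (\<lambda>h. grad \<phi> x \<bullet> h)) (at x)"
proof -
  obtain D where D: "(\<phi> has_derivative D) (at x)" using assms differentiable_def by blast
  hence "linear D" using has_derivative_linear by blast
  hence "D = (\<lambda>h. (\<Sum>b\<in>Basis. D b *\<^sub>R b) \<bullet> h)" using linear_repr by blast
  hence "\<exists>g. (\<phi> has_derivative (\<lambda>h. g \<bullet> h)) (at x)" using D by metis
  thus ?thesis unfolding grad_def by (rule someI_ex)
qed

lemma frechet_subset:
  fixes f :: "'a::euclidean_space \<Rightarrow> real"
  assumes d: "(f has_derivative (\<lambda>h. g \<bullet> h)) (at x)" and v: "v \<in> frechet_subdiff f x"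
  shows "v = g"
proof (rule ccontr)
  assume ne: "v \<noteq> g"
  define d where "d = g - v"
  have dpos: "norm d > 0" using ne by (simp add: d_def)
  define e where "e = norm d / 4"
  have e: "e > 0" using dpos by (simp add: e_def)
  obtain \<delta>1 where \<delta>1: "\<delta>1 > 0" "\<forall>y. norm (y - x) < \<delta>1 \<longrightarrow> norm (f y - f x - g \<bullet> (y - x)) \<le> e * norm (y - x)"
  proof -
    have "\<forall>e>0. \<exists>d>0. \<forall>y. norm(y - x) < d \<longrightarrow> norm (f y - f x - g \<bullet> (y - x)) \<le> e * norm (y - x)"
      using d unfolding has_derivative_at_alt by simp
    then show ?thesis using e that by blast
  qed
  have "\<forall>\<^sub>F y in at x. f y \<ge> f x + v \<bullet> (y - x) - e * norm (y - x)"
    using v e unfolding frechet_subdiff_def by simp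
  then obtain \<delta>2 where \<delta>2: "\<delta>2 > 0" "\<forall>y. 0 < dist y x \<and> dist y x < \<delta>2 \<longrightarrow> f y \<ge> f x + v \<bullet> (y - x) - e * norm (y - x)"
    unfolding eventually_at by (auto simp: dist_norm)
  define \<delta> where "\<delta> = min \<delta>1 \<delta>2"
  have \<delta>: "\<delta> > 0" using \<delta>1 \<delta>2 by (simp add: \<delta>_def)
  define t where "t = \<delta> / (2 * norm d)"
  have t: "t > 0" using \<delta> dpos by (simp add: t_def)
  define y where "y = x - t *\<^sub>R d"
  have yx: "y - x = - (t *\<^sub>R d)" by (simp add: y_def)
  have nyt: "norm (y - x) = t * norm d" using t by (simp add: yx)
  have ny: "norm (y - x) = \<delta> / 2" using dpos by (simp add: nyt t_def)
  have l1: "norm (y - x) < \<delta>1" using ny \<delta> unfolding \<delta>_def by linarith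
  have l2: "0 < dist y x \<and> dist y x < \<delta>2" using ny \<delta> unfolding \<delta>_def dist_norm by linarith
  have A: "norm (f y - f x - g \<bullet> (y - x)) \<le> e * norm (y - x)"
    using \<delta>1(2) l1 by blast
  have B: "f y \<ge> f x + v \<bullet> (y - x) - e * norm (y - x)"
    using \<delta>2(2) l2 by blast
  have A': "f y - f x - g \<bullet> (y - x) \<le> e * norm (y - x)"
    using A unfolding real_norm_def abs_le_iff by linarith
  have "(g - v) \<bullet> (y - x) = g \<bullet> (y - x) - v \<bullet> (y - x)" by (simp add: inner_diff_left)
  hence C: "(g - v) \<bullet> (y - x) \<ge> - 2 * e * norm (y - x)" using A' B by linarith
  have D: "(g - v) \<bullet> (y - x) = - t * norm d ^ 2"
    by (simp add: yx d_def power2_norm_eq_inner)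
  have "- t * norm d ^ 2 \<ge> - 2 * e * (t * norm d)" using C D nyt by simp
  hence "t * norm d ^ 2 \<le> t * (norm d / 2 * norm d)" by (simp add: e_def algebra_simps)
  hence "norm d ^2 \<le> norm d / 2 * norm d" using t by simp
  hence "norm d * norm d \<le> norm d / 2 * norm d" by (simp add: power2_eq_square)
  moreover have "norm d / 2 * norm d = (norm d * norm d)/2" by simp
  moreover have "norm d * norm d > 0" using dpos by simp
  ultimately show False by linarith
qed

lemma deriv_in_frechet:
  fixes f :: "'a::euclidean_space \<Rightarrow> real"
  assumes d: "(f has_derivative (\<lambda>h. g \<bullet> h)) (at x)"
  shows "g \<in> frechet_subdiff f x"
  unfolding frechet_subdiff_def
proof (safe)
  fix e :: real assume e: "e > 0"
  obtain \<delta> where \<delta>: "\<delta> > 0" "\<forall>y. norm (y - x) < \<delta> \<longrightarrow> norm (f y - f x - g \<bullet> (y - x)) \<le> e * norm (y - x)"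
    using d e unfolding has_derivative_at_alt by blast
  show "\<forall>\<^sub>F y in at x. f x + g \<bullet> (y - x) - e * norm (y - x) \<le> f y"
    unfolding eventually_at
  proof (intro exI[of _ \<delta>] conjI ballI impI)
    show "\<delta> > 0" by fact
    fix y assume "y \<in> UNIV" "y \<noteq> x \<and> dist y x < \<delta>"
    hence "norm (y - x) < \<delta>" by (simp add: dist_norm)
    hence "norm (f y - f x - g \<bullet> (y - x)) \<le> e * norm (y - x)" using \<delta>(2) by blast
    thus "f x + g \<bullet> (y - x) - e * norm (y - x) \<le> f y" unfolding real_norm_def abs_le_iff by linarith
  qed
qed


lemma limiting_eq:
  fixes f :: "'a::euclidean_space \<Rightarrow> real"
  assumes hd: "\<forall>x. (f has_derivative (\<lambda>h. g x \<bullet> h)) (at x)" and gc: "continuous_on UNIV g"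
    and vb: "vb \<in> limiting_subdiff f xb"
  shows "vb = g xb"
proof -
  obtain xs vs where xs: "xs \<longlonglongrightarrow> xb" and vs: "vs \<longlonglongrightarrow> vb"
    and fs: "\<forall>k. vs k \<in> frechet_subdiff f (xs k)"
    using vb unfolding limiting_subdiff_def by blast
  have eq: "\<And>k. vs k = g (xs k)" using fs hd frechet_subset by blast
  have "isCont g xb" using gc by (simp add: continuous_on_eq_continuous_at)
  hence "(\<lambda>k. g (xs k)) \<longlonglongrightarrow> g xb" using xs isCont_tendsto_compose by blast
  moreover have "vs = (\<lambda>k. g (xs k))" using eq by auto
  ultimately have "vs \<longlonglongrightarrow> g xb" by simp
  thus ?thesis using vs LIMSEQ_unique by blast
qed

lemma g_in_limiting:
  fixes f :: "'a::euclidean_space \<Rightarrow> real"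
  assumes hd: "\<forall>x. (f has_derivative (\<lambda>h. g x \<bullet> h)) (at x)"
  shows "g xb \<in> limiting_subdiff f xb"
  unfolding limiting_subdiff_def
  apply (rule CollectI)
  apply (rule exI[of _ "\<lambda>k. xb"], rule exI[of _ "\<lambda>k. g xb"])
  using deriv_in_frechet hd by auto

lemma fermat_step:
  fixes f \<phi> :: "'a::euclidean_space \<Rightarrow> real"
  assumes hf: "(f has_derivative (\<lambda>h. gx \<bullet> h)) (at xb)"
    and hp: "\<phi> differentiable (at z)"
    and le: "\<forall>x. f x \<ge> f xb - \<phi> (x - xb + z) + \<phi> z"
  shows "gx = - grad \<phi> z"
proof -
  define F where "F y = f y + \<phi> (y - xb + z) - \<phi> z - f xb" for y
  have d1: "((\<lambda>y. y - xb + z) has_derivative id) (at xb)"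
    by (auto intro!: derivative_eq_intros simp: id_def)
  have d2: "(\<phi> has_derivative (\<lambda>h. grad \<phi> z \<bullet> h)) (at ((\<lambda>y. y - xb + z) xb))"
    using grad_has_derivative[OF hp] by simp
  have d3: "((\<lambda>y. \<phi> (y - xb + z)) has_derivative (\<lambda>h. grad \<phi> z \<bullet> h)) (at xb)"
    using diff_chain_at[OF d1 d2] by (simp add: o_def)
  have dF: "(F has_derivative (\<lambda>h. gx \<bullet> h + grad \<phi> z \<bullet> h)) (at xb)"
  proof -
    have "((\<lambda>y. f y + \<phi> (y - xb + z) - \<phi> z - f xb) has_derivative (\<lambda>h. gx \<bullet> h + grad \<phi> z \<bullet> h - 0 - 0)) (at xb)"
      by (intro has_derivative_diff has_derivative_add hf d3 has_derivative_const)
    thus ?thesis unfolding F_def by simp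
  qed
  have mono: "\<forall>y\<in>UNIV. F xb \<le> F y"
  proof
    fix y show "F xb \<le> F y" using le[rule_format, of y] by (simp add: F_def)
  qed
  have "(\<lambda>h. gx \<bullet> h + grad \<phi> z \<bullet> h) = (\<lambda>v. 0)"
    using differential_zero_maxmin[of xb UNIV F, OF _ _ dF] mono by auto
  hence "gx \<bullet> (gx + grad \<phi> z) + grad \<phi> z \<bullet> (gx + grad \<phi> z) = 0" by metis
  hence "(gx + grad \<phi> z) \<bullet> (gx + grad \<phi> z) = 0" by (simp add: inner_add_left)
  hence "gx + grad \<phi> z = 0" by simp
  thus ?thesis by (simp add: eq_neg_iff_add_eq_0)
qed


lemma approx_touch:
  fixes f \<phi> :: "'a::euclidean_space \<Rightarrow> real"
  assumes hS: "\<forall>x. ereal (f x) = (SUP p\<in>S. ereal (Phi \<phi> x (fst p)) - snd p)"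
    and ep: "\<epsilon> > 0"
  shows "\<exists>z. \<forall>x. f x \<ge> f xb - \<phi> (x - xb + z) + \<phi> z - \<epsilon>"
proof -
  note hx = hS[rule_format, symmetric]
  have "ereal (f xb - \<epsilon>) < ereal (f xb)" using ep by simp
  hence "ereal (f xb - \<epsilon>) < (SUP p\<in>S. ereal (Phi \<phi> xb (fst p)) - snd p)" unfolding hx .
  hence "\<exists>p\<in>S. ereal (f xb - \<epsilon>) < ereal (Phi \<phi> xb (fst p)) - snd p"
    by (rule less_SUP_iff[THEN iffD1])
  then obtain p where pS: "p \<in> S" and plt: "ereal (f xb - \<epsilon>) < ereal (Phi \<phi> xb (fst p)) - snd p"
    by blast
  have ple: "\<And>x. ereal (Phi \<phi> x (fst p)) - snd p \<le> ereal (f x)"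
  proof -
    fix x
    have "ereal (Phi \<phi> x (fst p)) - snd p \<le> (SUP p\<in>S. ereal (Phi \<phi> x (fst p)) - snd p)"
      using pS by (rule SUP_upper)
    thus "ereal (Phi \<phi> x (fst p)) - snd p \<le> ereal (f x)" unfolding hx .
  qed
  obtain b where b: "snd p = ereal b"
  proof (cases "snd p")
    case (real r) thus ?thesis using that by blast
  next
    case PInf thus ?thesis using plt by simp
  next
    case MInf thus ?thesis using ple[of xb] by simp
  qed
  define y where "y = fst p"
  have lt: "f xb - \<epsilon> < - \<phi> (xb - y) - b" using plt b by (simp add: Phi_def y_def)
  have le: "\<And>x. - \<phi> (x - y) - b \<le> f x" using ple b by (simp add: Phi_def y_def)
  show ?thesis
  proof (intro exI allI)
    fix x
    have e: "x - xb + (xb - y) = x - y" by simp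
    show "f x \<ge> f xb - \<phi> (x - xb + (xb - y)) + \<phi> (xb - y) - \<epsilon>"
      unfolding e using lt le[of x] by linarith
  qed
qed

lemma bound_touch:
  fixes f \<phi> :: "'a::euclidean_space \<Rightarrow> real"
  assumes fc: "continuous_on UNIV f" and cv: "convex_on UNIV \<phi>" and sc: "super_coercive \<phi>"
  shows "\<exists>R. \<forall>z. (\<forall>x. f x \<ge> f xb - \<phi> (x - xb + z) + \<phi> z - 1) \<longrightarrow> norm z \<le> R"
proof -
  have "bounded (f ` cball xb 1)"
    by (intro compact_imp_bounded compact_continuous_image continuous_on_subset[OF fc]) auto
  then obtain M where M0: "\<forall>x\<in>f ` cball xb 1. norm x \<le> M"
    unfolding bounded_iff by blast
  have M: "\<And>x. x \<in> cball xb 1 \<Longrightarrow> \<bar>f x\<bar> \<le> M" using M0 by auto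
  define K where "K = 2 * M + 1 + \<bar>\<phi> 0\<bar>"
  have "\<forall>\<^sub>F z in at_infinity. K < \<phi> z / norm z"
    using sc unfolding super_coercive_def filterlim_at_top_dense by blast
  then obtain b where bb: "\<And>z. b \<le> norm z \<Longrightarrow> K < \<phi> z / norm z"
    unfolding eventually_at_infinity by blast
  show ?thesis
  proof (intro exI[of _ "max b 1"] allI impI)
    fix z assume P: "\<forall>x. f x \<ge> f xb - \<phi> (x - xb + z) + \<phi> z - 1"
    show "norm z \<le> max b 1"
    proof (rule ccontr)
      assume "\<not> norm z \<le> max b 1"
      hence nz: "norm z > 1" "norm z \<ge> b" by auto
      define t where "t = 1 / norm z"
      have z0: "z \<noteq> 0" using nz by auto
      have t: "0 < t" "t < 1" using nz z0 unfolding t_def by (simp_all add: divide_less_eq)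
      define u where "u = t *\<^sub>R z"
      have nu: "norm u = 1" using nz z0 by (simp add: u_def t_def)
      have x1: "xb - u \<in> cball xb 1" using nu by (simp add: dist_norm)
      have "f (xb - u) \<ge> f xb - \<phi> (xb - u - xb + z) + \<phi> z - 1" using P by blast
      moreover have "xb - u - xb + z = z - u" by simp
      moreover have "\<bar>f (xb - u)\<bar> \<le> M" "\<bar>f xb\<bar> \<le> M" using M x1 by auto
      ultimately have A: "\<phi> z - \<phi> (z - u) \<le> 2 * M + 1" by auto
      have "z - u = (1 - t) *\<^sub>R z + t *\<^sub>R 0" by (simp add: u_def algebra_simps)
      hence "\<phi> (z - u) \<le> (1 - t) * \<phi> z + t * \<phi> 0"
        using convex_onD[OF cv, of t z 0] t by simp
      hence "t * (\<phi> z - \<phi> 0) \<le> 2 * M + 1" using A by (simp add: algebra_simps)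
      hence "\<phi> z / norm z - \<phi> 0 / norm z \<le> 2 * M + 1"
        by (simp add: t_def divide_simps right_diff_distrib)
      moreover have "\<phi> 0 / norm z \<le> \<bar>\<phi> 0\<bar>"
      proof -
        have "\<bar>\<phi> 0 / norm z\<bar> = \<bar>\<phi> 0\<bar> / norm z" by simp
        also have "\<dots> \<le> \<bar>\<phi> 0\<bar>"
        proof -
          have "\<bar>\<phi> 0\<bar> * 1 \<le> \<bar>\<phi> 0\<bar> * norm z" by (rule mult_left_mono) (use nz in auto)
          thus ?thesis using nz z0 by (simp add: divide_le_eq)
        qed
        finally have "\<bar>\<phi> 0 / norm z\<bar> \<le> \<bar>\<phi> 0\<bar>" .
        thus ?thesis by (meson abs_ge_self order_trans)
      qed
      moreover have "K < \<phi> z / norm z" using bb nz by blast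
      ultimately show False unfolding K_def by linarith
    qed
  qed
qed


lemma touch:
  fixes f \<phi> :: "'a::euclidean_space \<Rightarrow> real"
  assumes hS: "\<forall>x. ereal (f x) = (SUP p\<in>S. ereal (Phi \<phi> x (fst p)) - snd p)"
    and fc: "continuous_on UNIV f" and cv: "convex_on UNIV \<phi>" and sc: "super_coercive \<phi>"
    and pc: "continuous_on UNIV \<phi>"
  shows "\<exists>z. \<forall>x. f x \<ge> f xb - \<phi> (x - xb + z) + \<phi> z"
proof -
  obtain R where R: "\<forall>z. (\<forall>x. f x \<ge> f xb - \<phi> (x - xb + z) + \<phi> z - 1) \<longrightarrow> norm z \<le> R"
    using bound_touch[OF fc cv sc] by blast
  define P where "P k z \<longleftrightarrow> (\<forall>x. f x \<ge> f xb - \<phi> (x - xb + z) + \<phi> z - inverse (real (Suc k)))" for k z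
  have "\<forall>k. \<exists>z. P k z"
  proof
    fix k
    have "inverse (real (Suc k)) > 0" by simp
    thus "\<exists>z. P k z" unfolding P_def by (rule approx_touch[OF hS])
  qed
  then obtain zs where zs: "\<And>k. P k (zs k)" by metis
  have inR: "\<forall>k. zs k \<in> cball 0 R"
  proof
    fix k
    have i1: "inverse (real (Suc k)) \<le> 1" by (simp add: field_simps)
    have "\<forall>x. f x \<ge> f xb - \<phi> (x - xb + zs k) + \<phi> (zs k) - 1"
    proof
      fix x show "f x \<ge> f xb - \<phi> (x - xb + zs k) + \<phi> (zs k) - 1"
        using zs[of k] i1 unfolding P_def by (smt (verit))
    qed
    thus "zs k \<in> cball 0 R" using R by simp
  qed
  obtain z' r where sm: "strict_mono r" and lim: "(zs \<circ> r) \<longlonglongrightarrow> z'"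
    using seq_compactE[OF compact_imp_seq_compact[OF compact_cball] inR] by blast
  have zr: "(\<lambda>n. zs (r n)) \<longlonglongrightarrow> z'" using lim by (simp add: o_def)
  have ic: "\<And>p. isCont \<phi> p" using pc by (simp add: continuous_on_eq_continuous_at)
  have inv: "(\<lambda>n. inverse (real (Suc (r n)))) \<longlonglongrightarrow> 0"
    using LIMSEQ_subseq_LIMSEQ[OF LIMSEQ_inverse_real_of_nat sm] by (simp add: o_def)
  show ?thesis
  proof (intro exI allI)
    fix x
    have t1: "(\<lambda>n. \<phi> (x - xb + zs (r n))) \<longlonglongrightarrow> \<phi> (x - xb + z')"
      by (rule isCont_tendsto_compose[OF ic]) (intro tendsto_intros zr)
    have t2: "(\<lambda>n. \<phi> (zs (r n))) \<longlonglongrightarrow> \<phi> z'"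
      by (rule isCont_tendsto_compose[OF ic zr])
    have "(\<lambda>n. f xb - \<phi> (x - xb + zs (r n)) + \<phi> (zs (r n)) - inverse (real (Suc (r n))))
          \<longlonglongrightarrow> f xb - \<phi> (x - xb + z') + \<phi> z' - 0"
      by (intro tendsto_intros t1 t2 inv)
    moreover have "\<exists>N. \<forall>n\<ge>N. f xb - \<phi> (x - xb + zs (r n)) + \<phi> (zs (r n)) - inverse (real (Suc (r n))) \<le> f x"
      using zs unfolding P_def by blast
    ultimately have "f xb - \<phi> (x - xb + z') + \<phi> z' - 0 \<le> f x" by (rule LIMSEQ_le_const2)
    thus "f xb - \<phi> (x - xb + z') + \<phi> z' \<le> f x" by simp
  qed
qed

theorem mainTheorem12:
  fixes \<phi> f :: "'a::euclidean_space \<Rightarrow> real"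
  assumes "standing \<phi>"
    and "\<exists>g. (\<forall>x. (f has_derivative (\<lambda>h. g x \<bullet> h)) (at x)) \<and> continuous_on UNIV g"
  shows "a_weakly_convex \<phi> f \<longleftrightarrow> left_Phi_convex (Phi \<phi>) f"
proof -
  obtain g where hd: "\<forall>x. (f has_derivative (\<lambda>h. g x \<bullet> h)) (at x)" and gc: "continuous_on UNIV g"
    using assms(2) by blast
  have lf: "legendre_full \<phi>" and bj: "bij (grad \<phi>)" and gi: "grad (fconj \<phi>) = inv (grad \<phi>)"
    using assms(1) unfolding standing_def by auto
  have cv: "convex_on UNIV \<phi>" and pd: "\<And>x. \<phi> differentiable (at x)" and sc: "super_coercive \<phi>"
    using lf unfolding legendre_full_def by auto
  have fc: "continuous_on UNIV f"
    using hd has_derivative_continuous continuous_at_imp_continuous_on by blast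
  have pc: "continuous_on UNIV \<phi>"
    using pd differentiable_imp_continuous_within continuous_at_imp_continuous_on by blast
  show ?thesis
  proof
    assume aw: "a_weakly_convex \<phi> f"
    define w where "w xb = grad (fconj \<phi>) (- g xb)" for xb
    have ineq: "\<And>x xb. f x \<ge> f xb - \<phi> (x - xb + w xb) + \<phi> (w xb)"
      using aw g_in_limiting[OF hd] unfolding a_weakly_convex_def w_def by blast
    define h where "h xb = (xb - w xb, ereal (- f xb - \<phi> (w xb)))" for xb
    have val: "\<And>x xb. ereal (Phi \<phi> x (fst (h xb))) - snd (h xb) = ereal (f xb - \<phi> (x - xb + w xb) + \<phi> (w xb))"
    proof -
      fix x xb
      have e: "x - (xb - w xb) = x - xb + w xb" by (simp add: algebra_simps)
      show "ereal (Phi \<phi> x (fst (h xb))) - snd (h xb) = ereal (f xb - \<phi> (x - xb + w xb) + \<phi> (w xb))"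
        unfolding h_def Phi_def fst_conv snd_conv e by simp
    qed
    show "left_Phi_convex (Phi \<phi>) f"
      unfolding left_Phi_convex_def
    proof (intro exI[of _ "range h"] allI)
      fix x
      have "(SUP p\<in>range h. ereal (Phi \<phi> x (fst p)) - snd p) = (SUP xb. ereal (Phi \<phi> x (fst (h xb))) - snd (h xb))"
        by (simp add: image_image)
      also have "\<dots> = (SUP xb. ereal (f xb - \<phi> (x - xb + w xb) + \<phi> (w xb)))"
        by (simp only: val)
      also have "\<dots> = ereal (f x)"
      proof (rule antisym)
        show "(SUP xb. ereal (f xb - \<phi> (x - xb + w xb) + \<phi> (w xb))) \<le> ereal (f x)"
          by (rule SUP_least) (use ineq in simp)
        show "ereal (f x) \<le> (SUP xb. ereal (f xb - \<phi> (x - xb + w xb) + \<phi> (w xb)))"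
          by (rule SUP_upper2[of x]) simp_all
      qed
      finally show "ereal (f x) = (SUP p\<in>range h. ereal (Phi \<phi> x (fst p)) - snd p)" by simp
    qed
  next
    assume lp: "left_Phi_convex (Phi \<phi>) f"
    then obtain S where hS: "\<forall>x. ereal (f x) = (SUP p\<in>S. ereal (Phi \<phi> x (fst p)) - snd p)"
      unfolding left_Phi_convex_def by blast
    show "a_weakly_convex \<phi> f"
      unfolding a_weakly_convex_def
    proof (intro allI impI)
      fix xb vb x assume vb: "vb \<in> limiting_subdiff f xb"
      have vg: "vb = g xb" using limiting_eq[OF hd gc vb] .
      obtain z where z: "\<forall>x. f x \<ge> f xb - \<phi> (x - xb + z) + \<phi> z"
        using touch[OF hS fc cv sc pc] by blast
      have "g xb = - grad \<phi> z" using fermat_step[OF hd[rule_format] pd z] .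
      hence "grad (fconj \<phi>) (- vb) = z"
        using vg gi bij_is_inj[OF bj] by (simp add: inv_f_f)
      thus "f xb - \<phi> (x - xb + grad (fconj \<phi>) (- vb)) + \<phi> (grad (fconj \<phi>) (- vb)) \<le> f x"
        using z by simp
    qed
  qed
qed

end
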